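(* Let $m\ge4$ and let $(c_1,\dots,c_m)\in\mathbb{C}^m$ be a quiddity cycle with at least one nonzero entry, with associated tame frieze pattern entries $a_{i,j}$. Then there exists a triangulation of the convex $m$-gon with vertices $1,\dots,m$ such that $a_{i,j}\ne0$ for every diagonal $(i,j)$ of the triangulation (i.e. the frieze pattern has a cluster without zero entry).
   Context: $\eta(c)=\begin{pmatrix}c&-1\\1&0\end{pmatrix}$. A quiddity cycle is $(c_1,\dots,c_m)$ with $\eta(c_1)\cdots\eta(c_m)=-I$. The associated tame frieze pattern is built as follows: - extend $(c_k)$ $m$-periodically; - set $M_{i,j}=\eta(c_i)\cdots\eta(c_j)$ for $i-1\le j$, the empty product being $I$; - its entries are $a_{i,j+2}=(M_{i,j})_{1,1}$ for $i-1\le j\le i+m-3$. A diagonal of the $m$-gon with vertices $1,\dots,m$ (in cyclic order) is a pair $(i,j)$ with $1\le i<j\le m$, $j-i\ge2$, $(i,j)\ne(1,m)$. A triangulation (cluster) is a maximal set of pairwise non-crossing diagonals; the corresponding entries $a_{i,j}$ form a cluster of the frieze pattern. *)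

theory Defs
  imports "HOL-Analysis.Analysis"
begin

definition eta :: "complex \<Rightarrow> complex^2^2" where
  "eta c = vector [vector [c, -1], vector [1, 0]]"

definition eta_prod :: "complex list \<Rightarrow> complex^2^2" where
  "eta_prod cs = foldr (\<lambda>c A. eta c ** A) cs (mat 1)"

definition quiddity_cycle :: "complex list \<Rightarrow> bool" where
  "quiddity_cycle cs \<longleftrightarrow> eta_prod cs = - mat 1"

text \<open>m-periodic extension, indices k \<ge> 1: c_k = cs ! ((k-1) mod m).\<close>
definition cper :: "complex list \<Rightarrow> nat \<Rightarrow> complex" where
  "cper cs k = cs ! ((k - 1) mod length cs)"

text \<open>M_{i,j} = eta(c_i) ... eta(c_j) (empty product I when j = i - 1).\<close>
definition Mfr :: "complex list \<Rightarrow> nat \<Rightarrow> nat \<Rightarrow> complex^2^2" where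
  "Mfr cs i j = eta_prod (map (cper cs) [i..<Suc j])"

text \<open>Frieze entry a_{i,j} = (M_{i,j-2})_{1,1}, for i + 1 \<le> j.\<close>
definition frieze_entry :: "complex list \<Rightarrow> nat \<Rightarrow> nat \<Rightarrow> complex" where
  "frieze_entry cs i j = Mfr cs i (j - 2) $ 1 $ 1"

definition is_diagonal :: "nat \<Rightarrow> nat \<times> nat \<Rightarrow> bool" where
  "is_diagonal m d \<longleftrightarrow> (case d of (i, j) \<Rightarrow>
     1 \<le> i \<and> i < j \<and> j \<le> m \<and> j - i \<ge> 2 \<and> (i, j) \<noteq> (1, m))"

definition crossing :: "nat \<times> nat \<Rightarrow> nat \<times> nat \<Rightarrow> bool" where
  "crossing d e \<longleftrightarrow> (case d of (i, j) \<Rightarrow> case e of (k, l) \<Rightarrow>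
     (i < k \<and> k < j \<and> j < l) \<or> (k < i \<and> i < l \<and> l < j))"

definition polygon_triangulation :: "nat \<Rightarrow> (nat \<times> nat) set \<Rightarrow> bool" where
  "polygon_triangulation m T \<longleftrightarrow>
     (\<forall>d\<in>T. is_diagonal m d) \<and>
     (\<forall>d\<in>T. \<forall>e\<in>T. \<not> crossing d e) \<and>
     (\<forall>d. is_diagonal m d \<and> d \<notin> T \<longrightarrow> (\<exists>e\<in>T. crossing d e))"

end

theory Submission
  imports Defs
begin


fun V :: "complex list \<Rightarrow> nat \<Rightarrow> complex \<times> complex" where
"V cs 0 = (0, -1)" | "V cs (Suc 0) = (1, 0)" |
"V cs (Suc (Suc n)) = (cper cs (Suc n) * fst (V cs (Suc n)) - fst (V cs n),
                        cper cs (Suc n) * snd (V cs (Suc n)) - snd (V cs n))"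

definition D :: "complex \<times> complex \<Rightarrow> complex \<times> complex \<Rightarrow> complex" where
  "D x y = fst x * snd y - snd x * fst y"

lemma D_self[simp]: "D x x = 0" by (simp add: D_def)

lemma D_cons: "D (V cs n) (V cs (Suc n)) = 1"
  by (induction n) (auto simp: D_def algebra_simps)

lemma D_rec: "D x (V cs (Suc (Suc k))) = cper cs (Suc k) * D x (V cs (Suc k)) - D x (V cs k)"
  by (simp add: D_def algebra_simps)

lemma foldr_eta: "foldr (\<lambda>c A. eta c ** A) xs B = eta_prod xs ** B"
  by (induction xs) (auto simp: eta_prod_def matrix_mul_assoc)

lemma eta_prod_snoc: "eta_prod (xs @ [c]) = eta_prod xs ** eta c"
proof -
  have "eta_prod (xs @ [c]) = foldr (\<lambda>c A. eta c ** A) xs (eta c ** mat 1)"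
    by (simp add: eta_prod_def)
  also have "\<dots> = eta_prod xs ** (eta c ** mat 1)" by (rule foldr_eta)
  finally show ?thesis by simp
qed

lemma mult_eta:
  "(A ** eta c) $ r $ 1 = A $ r $ 1 * c + A $ r $ 2"
  "(A ** eta c) $ r $ 2 = - A $ r $ 1"
  by (simp_all add: matrix_matrix_mult_def sum_2 eta_def)

lemma Xlem:
  assumes "i \<ge> 1"
  shows "eta_prod (map (cper cs) [i..<i+n]) $1$1 = D (V cs (i-1)) (V cs (i+n)) \<and>
         eta_prod (map (cper cs) [i..<i+n]) $1$2 = - D (V cs (i-1)) (V cs (i+n-1)) \<and>
         eta_prod (map (cper cs) [i..<i+n]) $2$1 = D (V cs i) (V cs (i+n)) \<and>
         eta_prod (map (cper cs) [i..<i+n]) $2$2 = - D (V cs i) (V cs (i+n-1))"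
proof (induction n)
  case 0
  have a: "D (V cs (i-1)) (V cs i) = 1" using D_cons[of cs "i-1"] assms by simp
  have b: "D (V cs i) (V cs (i-1)) = -1" using a by (simp add: D_def algebra_simps)
  show ?case using a b by (simp add: eta_prod_def mat_def)
next
  case (Suc n)
  obtain k where k: "i + n = Suc k" using assms by (metis add_Suc le_add_diff_inverse le_iff_add plus_1_eq_Suc)
  have eq: "[i..<i+Suc n] = [i..<i+n] @ [i+n]" by simp
  show ?case using Suc unfolding eq eta_prod_snoc map_append list.map mult_eta
    by (simp add: k del: upt_Suc) (simp add: D_def algebra_simps)
qed

lemma frieze_D:
  assumes "1 \<le> i" "i + 2 \<le> j"
  shows "frieze_entry cs i j = D (V cs (i-1)) (V cs (j-1))"
proof -
  have e: "Suc (j-2) = i + (j-1-i)" using assms by simp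
  have e2: "i + (j-1-i) = j - 1" using assms by simp
  have X: "eta_prod (map (cper cs) [i..<i+(j-1-i)]) $1$1 = D (V cs (i-1)) (V cs (i+(j-1-i)))"
    using Xlem[OF assms(1), of cs "j-1-i"] by blast
  show ?thesis unfolding frieze_entry_def Mfr_def e X by (simp only: e2)
qed

definition sr :: "nat set \<Rightarrow> nat \<Rightarrow> nat \<Rightarrow> bool" where
 "sr S x y \<longleftrightarrow> x \<in> S \<and> y \<in> S \<and> x \<noteq> y \<and>
   ((x < y \<and> (\<forall>z\<in>S. \<not> (x < z \<and> z < y))) \<or> (y < x \<and> (\<forall>z\<in>S. y \<le> z \<and> z \<le> x)))"

definition proper :: "nat set \<Rightarrow> (nat \<Rightarrow> 'c) \<Rightarrow> bool" where
 "proper S col \<longleftrightarrow> (\<forall>x y. sr S x y \<longrightarrow> col x \<noteq> col y)"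

definition diag :: "nat set \<Rightarrow> nat \<times> nat \<Rightarrow> bool" where
 "diag S d \<longleftrightarrow> (case d of (a,b) \<Rightarrow> a \<in> S \<and> b \<in> S \<and> a < b \<and> (\<exists>x\<in>S. a<x \<and> x<b) \<and> (\<exists>x\<in>S. x<a \<or> b<x))"

definition tri :: "nat set \<Rightarrow> (nat\<times>nat) set \<Rightarrow> bool" where
 "tri S T \<longleftrightarrow> (\<forall>d\<in>T. diag S d) \<and> (\<forall>d\<in>T. \<forall>e\<in>T. \<not> crossing d e) \<and>
    (\<forall>d. diag S d \<and> d \<notin> T \<longrightarrow> (\<exists>e\<in>T. crossing d e))"

definition ear_cond :: "nat set \<Rightarrow> nat \<Rightarrow> nat \<Rightarrow> nat \<Rightarrow> bool" where
 "ear_cond S w a b \<longleftrightarrow> a < b \<and> a \<in> S \<and> b \<in> S \<and> w \<in> S \<and>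
   ((a < w \<and> w < b \<and> (\<forall>z\<in>S. a < z \<and> z < b \<longrightarrow> z = w)) \<or>
    ((w < a \<or> b < w) \<and> (\<forall>z\<in>S. z < a \<or> b < z \<longrightarrow> z = w)))"


lemma sr_2cycle: assumes "sr S x y" "sr S y x" shows "S \<subseteq> {x, y}"
proof
  fix t assume t: "t \<in> S"
  show "t \<in> {x, y}"
  proof (cases "x < y")
    case True
    then have "\<not>(x<t\<and>t<y)" "x \<le> t" "t \<le> y" using assms t unfolding sr_def by auto
    then show ?thesis by auto
  next
    case False
    then have "\<not>(y<t\<and>t<x)" "y \<le> t" "t \<le> x" using assms t unfolding sr_def by auto
    then show ?thesis by auto
  qed
qed

lemma sr_skip: assumes "sr S x w" "sr S w z" "x \<noteq> z" shows "sr (S - {w}) x z"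
proof -
  have xz: "x \<in> S" "z \<in> S" "x \<noteq> w" "z \<noteq> w" using assms unfolding sr_def by auto
  consider (a) "x < w" "w < z" | (b) "x < w" "z < w" | (c) "w < x" "w < z" | (d) "w < x" "z < w"
    using xz by linarith
  then show ?thesis
  proof cases
    case a
    then have "\<forall>t\<in>S. \<not>(x<t\<and>t<w)" "\<forall>t\<in>S. \<not>(w<t\<and>t<z)" using assms unfolding sr_def by auto
    then show ?thesis using a xz unfolding sr_def by (auto simp: not_less) (metis le_antisym not_le)
  next
    case b
    then have "\<forall>t\<in>S. \<not>(x<t\<and>t<w)" "\<forall>t\<in>S. z \<le> t \<and> t \<le> w" using assms unfolding sr_def by auto
    then show ?thesis using b xz assms(3) unfolding sr_def by (auto simp: not_less) (metis le_neq_implies_less not_less)+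
  next
    case c
    then have "\<forall>t\<in>S. w \<le> t \<and> t \<le> x" "\<forall>t\<in>S. \<not>(w<t\<and>t<z)" using assms unfolding sr_def by auto
    then show ?thesis using c xz assms(3) unfolding sr_def by (auto simp: not_less) (metis le_neq_implies_less not_less)+
  next
    case d
    then have "\<forall>t\<in>S. w \<le> t \<and> t \<le> x" "\<forall>t\<in>S. z \<le> t \<and> t \<le> w" using assms unfolding sr_def by auto
    then show ?thesis using d xz by auto
  qed
qed

lemma sr_unique: assumes "sr S x y" "sr S x z" shows "y = z"
proof -
  have A: "y \<in> S" "z \<in> S" using assms by (auto simp: sr_def)
  have B: "(x < y \<and> \<not>(x<z \<and> z<y)) \<or> (y<x \<and> y \<le> z \<and> z \<le> x)" using assms(1) A unfolding sr_def by auto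
  have C: "(x < z \<and> \<not>(x<y \<and> y<z)) \<or> (z<x \<and> z \<le> y \<and> y \<le> x)" using assms(2) A unfolding sr_def by auto
  from B C show ?thesis by (elim disjE; linarith)
qed

lemma sr_unique_pred: assumes "sr S y x" "sr S z x" shows "y = z"
proof -
  have A: "y \<in> S" "z \<in> S" using assms by (auto simp: sr_def)
  have B: "(y < x \<and> \<not>(y<z \<and> z<x)) \<or> (x<y \<and> x \<le> z \<and> z \<le> y)" using assms(1) A unfolding sr_def by auto
  have C: "(z < x \<and> \<not>(z<y \<and> y<x)) \<or> (x<z \<and> x \<le> y \<and> y \<le> z)" using assms(2) A unfolding sr_def by auto
  from B C show ?thesis by (elim disjE; linarith)
qed

lemma sr_restrict: "sr S x y \<Longrightarrow> x \<noteq> w \<Longrightarrow> y \<noteq> w \<Longrightarrow> sr (S - {w}) x y"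
  unfolding sr_def by auto

lemma sr_in: "sr S x y \<Longrightarrow> x \<in> S \<and> y \<in> S \<and> x \<noteq> y"
  unfolding sr_def by auto

lemma card_sub2: assumes "S \<subseteq> {x, y}" shows "card S \<le> 2"
proof -
  have "card S \<le> card {x,y}" by (rule card_mono) (use assms in auto)
  also have "card {x,y} \<le> 2" by (cases "x = y") auto
  finally show ?thesis .
qed

lemma sr_no2cycle: "finite S \<Longrightarrow> card S \<ge> 3 \<Longrightarrow> sr S x y \<Longrightarrow> sr S y x \<Longrightarrow> False"
  using sr_2cycle card_sub2 by (metis not_less_eq_eq numeral_3_eq_3 numeral_2_eq_2)

lemma sr_exists:
  assumes "finite S" "x \<in> S" "card S \<ge> 2" shows "\<exists>y. sr S x y"
proof (cases "\<exists>y\<in>S. y > x")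
  case True
  let ?A = "{y\<in>S. y > x}"
  have f: "finite ?A" "?A \<noteq> {}" using assms True by auto
  have "Min ?A \<in> ?A" using Min_in[OF f] .
  then have mA: "Min ?A \<in> S" "x < Min ?A" by auto
  have nb: "\<forall>z\<in>S. \<not> (x < z \<and> z < Min ?A)"
  proof (intro ballI notI)
    fix z assume z: "z \<in> S" "x < z \<and> z < Min ?A"
    then have "z \<in> ?A" by simp
    then have "Min ?A \<le> z" using Min_le[OF f(1)] by blast
    then show False using z by (meson leD)
  qed
  have "sr S x (Min ?A)" unfolding sr_def using mA assms(2) nb less_imp_neq[OF mA(2)] by blast
  then show ?thesis by blast
next
  case False
  have ne: "S \<noteq> {}" using assms by auto
  have m: "Min S \<in> S" using Min_in[OF assms(1) ne] .
  have le: "\<forall>z\<in>S. Min S \<le> z \<and> z \<le> x"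
  proof
    fix z assume z: "z \<in> S"
    have "Min S \<le> z" using Min_le[OF assms(1) z] .
    moreover have "\<not> z > x" using False z by blast
    ultimately show "Min S \<le> z \<and> z \<le> x" by simp
  qed
  have "Min S \<noteq> x"
  proof
    assume mx: "Min S = x"
    have "S \<subseteq> {x}"
    proof
      fix t assume t: "t \<in> S"
      have "Min S \<le> t" "t \<le> x" using le t by auto
      then have "t = x" using mx by simp
      then show "t \<in> {x}" by simp
    qed
    then have "card S \<le> card {x}" by (intro card_mono) auto
    then show False using assms by simp
  qed
  then have lt: "Min S < x" using le assms(2) by (meson le_neq_implies_less)
  have "sr S x (Min S)" unfolding sr_def using le lt assms(2) m less_imp_neq[OF lt] by blast
  then show ?thesis by blast
qed

lemma sr_exists_pred:
  assumes "finite S" "x \<in> S" "card S \<ge> 2" shows "\<exists>y. sr S y x"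
proof (cases "\<exists>y\<in>S. y < x")
  case True
  let ?A = "{y\<in>S. y < x}"
  have f: "finite ?A" "?A \<noteq> {}" using assms True by auto
  have "Max ?A \<in> ?A" using Max_in[OF f] .
  then have mA: "Max ?A \<in> S" "Max ?A < x" by auto
  have nb: "\<forall>z\<in>S. \<not> (Max ?A < z \<and> z < x)"
  proof (intro ballI notI)
    fix z assume z: "z \<in> S" "Max ?A < z \<and> z < x"
    then have "z \<in> ?A" by simp
    then have "z \<le> Max ?A" using Max_ge[OF f(1)] by blast
    then show False using z by (meson leD)
  qed
  have "sr S (Max ?A) x" unfolding sr_def using mA assms(2) nb less_imp_neq[OF mA(2)] by blast
  then show ?thesis by blast
next
  case False
  have ne: "S \<noteq> {}" using assms by auto
  have m: "Max S \<in> S" using Max_in[OF assms(1) ne] .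
  have le: "\<forall>z\<in>S. x \<le> z \<and> z \<le> Max S"
  proof
    fix z assume z: "z \<in> S"
    have "z \<le> Max S" using Max_ge[OF assms(1) z] .
    moreover have "\<not> z < x" using False z by blast
    ultimately show "x \<le> z \<and> z \<le> Max S" by simp
  qed
  have "Max S \<noteq> x"
  proof
    assume mx: "Max S = x"
    have "S \<subseteq> {x}"
    proof
      fix t assume t: "t \<in> S"
      have "x \<le> t" "t \<le> Max S" using le t by auto
      then have "t = x" using mx by simp
      then show "t \<in> {x}" by simp
    qed
    then have "card S \<le> card {x}" by (intro card_mono) auto
    then show False using assms by simp
  qed
  moreover have "x \<le> Max S" using le assms(2) by blast
  ultimately have lt: "x < Max S" by simp
  have "sr S (Max S) x" unfolding sr_def using le lt assms(2) m less_imp_neq[OF lt] by blast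
  then show ?thesis by blast
qed

lemma sr_remove:
  assumes "finite S" "card S \<ge> 3" "sr S p w" "sr S w s" "sr (S-{w}) x y"
  shows "sr S x y \<or> (x = p \<and> y = s)"
proof -
  have x: "x \<in> S" "x \<noteq> w" using assms(5) unfolding sr_def by auto
  obtain x' where x': "sr S x x'" using sr_exists[OF assms(1) x(1)] assms(2) by auto
  show ?thesis
  proof (cases "x' = w")
    case True
    then have "x = p" using sr_unique_pred[OF _ assms(3), of x] x' by simp
    moreover have "p \<noteq> s" using sr_no2cycle[OF assms(1,2), of w p] assms(3,4) by auto
    ultimately have "sr (S-{w}) x s" using sr_skip[OF assms(3,4)] by simp
    then have "y = s" using sr_unique[OF assms(5)] by simp
    then show ?thesis using \<open>x = p\<close> by simp
  next
    case False
    then have "sr (S-{w}) x x'" using sr_restrict[OF x'] x by simp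
    then have "y = x'" using sr_unique[OF assms(5)] by simp
    then show ?thesis using x' by simp
  qed
qed

lemma crossing_sym: "crossing d e = crossing e d"
  by (cases d; cases e) (auto simp: crossing_def)

lemma sr_ear:
  assumes "sr S p w" "sr S w s" "p \<noteq> s"
  shows "ear_cond S w (min p s) (max p s)"
proof -
  have m: "p \<in> S" "w \<in> S" "s \<in> S" "p \<noteq> w" "w \<noteq> s" using assms unfolding sr_def by auto
  have P: "(p < w \<and> (\<forall>z\<in>S. \<not>(p<z\<and>z<w))) \<or> (w<p \<and> (\<forall>z\<in>S. w\<le>z \<and> z\<le>p))"
    using assms(1) unfolding sr_def by blast
  have W: "(w < s \<and> (\<forall>z\<in>S. \<not>(w<z\<and>z<s))) \<or> (s<w \<and> (\<forall>z\<in>S. s\<le>z \<and> z\<le>w))"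
    using assms(2) unfolding sr_def by blast
  from P show ?thesis
  proof (elim disjE conjE)
    assume pw: "p < w" and A1: "\<forall>z\<in>S. \<not>(p<z\<and>z<w)"
    from W show ?thesis
    proof (elim disjE conjE)
      assume ws: "w < s" and A2: "\<forall>z\<in>S. \<not>(w<z\<and>z<s)"
      have mm: "min p s = p" "max p s = s" using pw ws by auto
      have "\<forall>z\<in>S. p < z \<and> z < s \<longrightarrow> z = w"
      proof (intro ballI impI)
        fix z assume z: "z \<in> S" "p < z \<and> z < s"
        have "\<not>(p<z\<and>z<w)" "\<not>(w<z\<and>z<s)" using A1 A2 z(1) by blast+
        then show "z = w" using z(2) by arith
      qed
      moreover have "p < s" using pw ws by simp
      ultimately show ?thesis unfolding mm ear_cond_def using m pw ws by blast
    next
      assume sw: "s < w" and A2: "\<forall>z\<in>S. s\<le>z \<and> z\<le>w"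
      have "s \<le> p" using A2 m(1) by blast
      then have sp: "s < p" using assms(3) by simp
      have mm: "min p s = s" "max p s = p" using sp by auto
      have "\<forall>z\<in>S. z < s \<or> p < z \<longrightarrow> z = w"
      proof (intro ballI impI)
        fix z assume z: "z \<in> S" "z < s \<or> p < z"
        have "\<not>(p<z\<and>z<w)" "s\<le>z \<and> z\<le>w" using A1 A2 z(1) by blast+
        then show "z = w" using z(2) by arith
      qed
      then show ?thesis unfolding mm ear_cond_def using m pw sp by blast
    qed
  next
    assume wp: "w < p" and A1: "\<forall>z\<in>S. w\<le>z \<and> z\<le>p"
    from W show ?thesis
    proof (elim disjE conjE)
      assume ws: "w < s" and A2: "\<forall>z\<in>S. \<not>(w<z\<and>z<s)"
      have "s \<le> p" using A1 m(3) by blast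
      then have sp: "s < p" using assms(3) by simp
      have mm: "min p s = s" "max p s = p" using sp by auto
      have "\<forall>z\<in>S. z < s \<or> p < z \<longrightarrow> z = w"
      proof (intro ballI impI)
        fix z assume z: "z \<in> S" "z < s \<or> p < z"
        have "w\<le>z \<and> z\<le>p" "\<not>(w<z\<and>z<s)" using A1 A2 z(1) by blast+
        then show "z = w" using z(2) by arith
      qed
      then show ?thesis unfolding mm ear_cond_def using m ws sp by blast
    next
      assume sw: "s < w" and A2: "\<forall>z\<in>S. s\<le>z \<and> z\<le>w"
      have "p \<le> w" using A2 m(1) by blast
      then show ?thesis using wp by simp
    qed
  qed
qed

lemma ear_interior_or_wrap:
  assumes "ear_cond S w a b"
  obtains (int) "a < w" "w < b" "\<And>z. z \<in> S \<Longrightarrow> a < z \<Longrightarrow> z < b \<Longrightarrow> z = w"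
    | (wrap) "w < a \<or> b < w" "\<And>z. z \<in> S \<Longrightarrow> z < a \<or> b < z \<Longrightarrow> z = w"
  using assms unfolding ear_cond_def by blast

lemma ear_basic: "ear_cond S w a b \<Longrightarrow> a < b \<and> a \<in> S \<and> b \<in> S \<and> w \<in> S \<and> a \<noteq> w \<and> b \<noteq> w"
  unfolding ear_cond_def by auto

lemma nocross:
  assumes E: "ear_cond S w a b" and d: "diag (S-{w}) (x,y)"
  shows "\<not> crossing (x,y) (a,b)"
proof
  assume c: "crossing (x,y) (a,b)"
  have xy: "x \<in> S" "y \<in> S" "x \<noteq> w" "y \<noteq> w" "x < y" using d unfolding diag_def by auto
  from c have c': "(x<a \<and> a<y \<and> y<b) \<or> (a<x \<and> x<b \<and> b<y)" unfolding crossing_def by auto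
  from E show False
  proof (cases rule: ear_interior_or_wrap)
    case int
    from c' show False
    proof
      assume "x<a \<and> a<y \<and> y<b" then show False using int(3)[of y] xy by auto
    next
      assume "a<x \<and> x<b \<and> b<y" then show False using int(3)[of x] xy by auto
    qed
  next
    case wrap
    from c' show False
    proof
      assume "x<a \<and> a<y \<and> y<b" then show False using wrap(2)[of x] xy by auto
    next
      assume "a<x \<and> x<b \<and> b<y" then show False using wrap(2)[of y] xy by auto
    qed
  qed
qed

lemma inner_diag:
  assumes E: "ear_cond S w a b" and d: "diag S (x,y)" and n: "x \<noteq> w" "y \<noteq> w" "(x,y) \<noteq> (a,b)"
  shows "diag (S-{w}) (x,y)"
proof -
  have B: "a < b" "a \<in> S" "b \<in> S" "w \<in> S" "a \<noteq> w" "b \<noteq> w" using ear_basic[OF E] by auto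
  have D: "x \<in> S" "y \<in> S" "x < y" using d unfolding diag_def by auto
  obtain t where t: "t \<in> S" "x < t" "t < y" using d unfolding diag_def by auto
  obtain u where u: "u \<in> S" "u < x \<or> y < u" using d unfolding diag_def by auto
  from E show ?thesis
  proof (cases rule: ear_interior_or_wrap)
    case int
    have btw: "\<exists>t\<in>S-{w}. x < t \<and> t < y"
    proof (cases "t = w")
      case False then show ?thesis using t by auto
    next
      case True
      show ?thesis
      proof (cases "x < a")
        case True then show ?thesis using B \<open>t = w\<close> t int(1,2) by auto
      next
        case False
        have "x = a"
        proof (rule ccontr)
          assume "x \<noteq> a" then have "a < x" using False by simp
          then show False using int(3)[of x] int(1,2) D t \<open>t = w\<close> n by auto
        qed
        then have "y \<noteq> b" using n by auto
        have "\<not> y < b" using int(3)[of y] D t \<open>t = w\<close> n \<open>x = a\<close> by auto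
        then have "b < y" using \<open>y \<noteq> b\<close> by simp
        then show ?thesis using B \<open>x = a\<close> by (intro bexI[of _ b]) auto
      qed
    qed
    have out: "\<exists>u\<in>S-{w}. u < x \<or> y < u"
    proof (cases "u = w")
      case False then show ?thesis using u by auto
    next
      case True
      show ?thesis
      proof (cases "u < x")
        case True
        then have "a < x" using \<open>u = w\<close> int(1) by simp
        then show ?thesis using B by (intro bexI[of _ a]) auto
      next
        case False
        then have "y < w" using u \<open>u = w\<close> by simp
        then have "y < b" using int(2) by simp
        then show ?thesis using B by (intro bexI[of _ b]) auto
      qed
    qed
    show ?thesis using btw out D n unfolding diag_def by auto
  next
    case wrap
    have xS: "a \<le> x" "x \<le> b" using wrap(2)[of x] D n by force+
    have yS: "a \<le> y" "y \<le> b" using wrap(2)[of y] D n by force+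
    have "t \<noteq> w" using t xS yS wrap(1) by auto
    then have btw: "\<exists>t\<in>S-{w}. x < t \<and> t < y" using t by auto
    have out: "\<exists>u\<in>S-{w}. u < x \<or> y < u"
    proof (cases "a < x")
      case True then show ?thesis using B by auto
    next
      case False
      then have "x = a" using xS by simp
      then have "y < b" using n yS by auto
      then show ?thesis using B by auto
    qed
    show ?thesis using btw out D n unfolding diag_def by auto
  qed
qed

lemma endpoint_cross:
  assumes E: "ear_cond S w a b" and d: "diag S (x,y)" and xw: "x = w \<or> y = w"
  shows "crossing (x,y) (a,b)"
proof -
  have B: "a < b" "a \<in> S" "b \<in> S" "w \<in> S" "a \<noteq> w" "b \<noteq> w" using ear_basic[OF E] by auto
  have D: "x \<in> S" "y \<in> S" "x < y" using d unfolding diag_def by auto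
  obtain t where t: "t \<in> S" "x < t" "t < y" using d unfolding diag_def by auto
  obtain u where u: "u \<in> S" "u < x \<or> y < u" using d unfolding diag_def by auto
  from E show ?thesis
  proof (cases rule: ear_interior_or_wrap)
    case int
    show ?thesis
    proof (cases "x = w")
      case True
      have "b < y"
      proof (rule ccontr)
        assume "\<not> b < y"
        then have "y \<le> b" by simp
        show False
        proof (cases "y = b")
          case True
          have "a < t" "t < b" using t \<open>x = w\<close> int(1,2) True by auto
          then have "t = w" using int(3)[of t] t by auto
          then show False using t \<open>x = w\<close> by simp
        next
          case False then show False using int(3)[of y] D \<open>y \<le> b\<close> \<open>x = w\<close> int(1,2) by auto
        qed
      qed
      then show ?thesis using True int(1,2) unfolding crossing_def by auto
    next
      case False
      then have yw: "y = w" using xw by simp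
      have "x < a"
      proof (rule ccontr)
        assume "\<not> x < a"
        then have "a \<le> x" by simp
        show False
        proof (cases "x = a")
          case True
          have "a < t" "t < b" using t yw int(1,2) True by auto
          then have "t = w" using int(3)[of t] t by auto
          then show False using t yw by simp
        next
          case False then show False using int(3)[of x] D \<open>a \<le> x\<close> yw int(1,2) by auto
        qed
      qed
      then show ?thesis using yw int(1,2) unfolding crossing_def by auto
    qed
  next
    case wrap
    show ?thesis
    proof (cases "x = w")
      case True
      have wy: "w < y" "w < t" using D(3) t(2) True by simp_all
      have yS: "\<not> (y < a \<or> b < y)"
      proof
        assume "y < a \<or> b < y" then have "y = w" using wrap(2) D(2) by blast
        then show False using wy by simp
      qed
      have wa: "w < a" using wrap(1) wy yS by auto
      have ya: "y \<noteq> a"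
      proof
        assume "y = a" then have "t < a" using t by simp
        then have "t = w" using wrap(2) t(1) by blast
        then show False using wy by simp
      qed
      have yb: "y \<noteq> b"
      proof
        assume yb: "y = b"
        have "u < a \<or> b < u" using u(2) True yb wa by auto
        then have "u = w" using wrap(2) u(1) by blast
        then show False using u(2) True wy by auto
      qed
      have "x < a \<and> a < y \<and> y < b" using True wa yS ya yb by auto
      then show ?thesis unfolding crossing_def by simp
    next
      case False
      then have yw: "y = w" using xw by simp
      have wy: "x < w" "t < w" using D(3) t(3) yw by simp_all
      have xS: "\<not> (x < a \<or> b < x)"
      proof
        assume "x < a \<or> b < x" then have "x = w" using wrap(2) D(1) by blast
        then show False using wy by simp
      qed
      have wa: "b < w" using wrap(1) wy xS by auto
      have xb: "x \<noteq> b"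
      proof
        assume "x = b" then have "b < t" using t by simp
        then have "t = w" using wrap(2) t(1) by blast
        then show False using wy by simp
      qed
      have xa: "x \<noteq> a"
      proof
        assume xa: "x = a"
        have "u < a \<or> b < u" using u(2) yw xa wa by auto
        then have "u = w" using wrap(2) u(1) by blast
        then show False using u(2) yw wy by auto
      qed
      have "a < x \<and> x < b \<and> b < y" using yw wa xS xa xb by auto
      then show ?thesis unfolding crossing_def by simp
    qed
  qed
qed


lemma sr_maxbelow:
  assumes "finite S" "y \<in> S" "\<exists>x\<in>S. x < y"
  shows "sr S (Max {x\<in>S. x < y}) y \<and> Max {x\<in>S. x < y} < y"
proof -
  let ?A = "{x\<in>S. x < y}"
  have f: "finite ?A" "?A \<noteq> {}" using assms by auto
  have "Max ?A \<in> ?A" using Max_in[OF f] .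
  then have mA: "Max ?A \<in> S" "Max ?A < y" by auto
  have nb: "\<forall>z\<in>S. \<not> (Max ?A < z \<and> z < y)"
  proof (intro ballI notI)
    fix z assume z: "z \<in> S" "Max ?A < z \<and> z < y"
    then have "z \<in> ?A" by simp
    then have "z \<le> Max ?A" using Max_ge[OF f(1)] by blast
    then show False using z by (meson leD)
  qed
  have "sr S (Max ?A) y" unfolding sr_def using mA assms(2) nb less_imp_neq[OF mA(2)] by blast
  then show ?thesis using mA by blast
qed

lemma no_diag:
  assumes "finite S" "diag S d" shows "card S \<ge> 4"
proof -
  obtain a b where d: "d = (a,b)" by (cases d)
  obtain x y where xy: "a \<in> S" "b \<in> S" "a < b" "x \<in> S" "a < x" "x < b" "y \<in> S" "y < a \<or> b < y"
    using assms(2) unfolding d diag_def by auto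
  have ne: "a \<noteq> x" "a \<noteq> b" "a \<noteq> y" "x \<noteq> b" "x \<noteq> y" "b \<noteq> y" using xy by auto
  have "card {a,x,b,y} = 4" using ne by simp
  moreover have "card {a,x,b,y} \<le> card S" using xy assms(1) by (intro card_mono) auto
  ultimately show ?thesis by simp
qed

lemma diag_mono: "diag (S - {w}) d \<Longrightarrow> diag S d"
  unfolding diag_def by (cases d) auto

lemma ear_tri:
  assumes fin: "finite S" and c4: "card S \<ge> 4" and E: "ear_cond S w a b" and T: "tri (S-{w}) T"
  shows "tri S (insert (a,b) T)"
proof -
  have B: "a < b" "a \<in> S" "b \<in> S" "w \<in> S" "a \<noteq> w" "b \<noteq> w" using ear_basic[OF E] by auto
  have "\<not> S \<subseteq> {a,b,w}"
  proof
    assume "S \<subseteq> {a,b,w}"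
    then have "card S \<le> card {a,b,w}" by (intro card_mono) auto
    also have "card {a,b,w} \<le> 3" by (simp add: card_insert_if)
    finally show False using c4 by simp
  qed
  then obtain z where z: "z \<in> S" "z \<noteq> a" "z \<noteq> b" "z \<noteq> w" by auto
  have dab: "diag S (a,b)"
  proof -
    from E show ?thesis
    proof (cases rule: ear_interior_or_wrap)
      case int
      have "\<not> (a < z \<and> z < b)" using int(3)[of z] z by auto
      then have "z < a \<or> b < z" using z by auto
      then show ?thesis unfolding diag_def using B int(1,2) z(1) by auto
    next
      case wrap
      have "\<not> (z < a \<or> b < z)" using wrap(2)[of z] z by auto
      then have "a < z \<and> z < b" using z by auto
      then show ?thesis unfolding diag_def using B wrap(1) z(1) by auto
    qed
  qed
  have T1: "\<forall>d\<in>T. diag (S-{w}) d" "\<forall>d\<in>T. \<forall>e\<in>T. \<not> crossing d e"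
    "\<forall>d. diag (S-{w}) d \<and> d \<notin> T \<longrightarrow> (\<exists>e\<in>T. crossing d e)" using T unfolding tri_def by auto
  have nc: "\<not> crossing d (a,b)" if "d \<in> T" for d
  proof -
    obtain x y where d: "d = (x,y)" by (cases d)
    show ?thesis using nocross[OF E] T1(1) that unfolding d by blast
  qed
  have self: "\<not> crossing (a,b) (a,b)" unfolding crossing_def by auto
  have P1: "\<forall>d\<in>insert (a,b) T. diag S d" using dab T1(1) diag_mono by blast
  have P2: "\<forall>d\<in>insert (a,b) T. \<forall>e\<in>insert (a,b) T. \<not> crossing d e"
    using nc self T1(2) crossing_sym by blast
  have P3: "\<forall>d. diag S d \<and> d \<notin> insert (a,b) T \<longrightarrow> (\<exists>e\<in>insert (a,b) T. crossing d e)"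
  proof (intro allI impI)
    fix d assume dd: "diag S d \<and> d \<notin> insert (a,b) T"
    obtain x y where d: "d = (x,y)" by (cases d)
    show "\<exists>e\<in>insert (a,b) T. crossing d e"
    proof (cases "x = w \<or> y = w")
      case True
      then have "crossing (x,y) (a,b)" using endpoint_cross[OF E] dd unfolding d by blast
      then show ?thesis unfolding d by blast
    next
      case False
      then have "diag (S-{w}) (x,y)" using inner_diag[OF E, of x y] dd unfolding d by blast
      then show ?thesis using T1(3) dd unfolding d by blast
    qed
  qed
  show ?thesis unfolding tri_def using P1 P2 P3 by blast
qed


lemma proper_remove:
  assumes "finite S" "card S \<ge> 3" "proper S col" "sr S p w" "sr S w s" "col p \<noteq> col s"
  shows "proper (S-{w}) col"
  unfolding proper_def
proof (intro allI impI)
  fix x y assume "sr (S-{w}) x y"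
  then have "sr S x y \<or> (x = p \<and> y = s)" using sr_remove[OF assms(1,2,4,5)] by blast
  then show "col x \<noteq> col y" using assms(3,6) unfolding proper_def by blast
qed

lemma good_exists:
  assumes fin: "finite S" and c3: "card S \<ge> 3" and pr: "proper S col" and cc: "card (col ` S) \<ge> 3"
  shows "\<exists>p w s. sr S p w \<and> sr S w s \<and> col p \<noteq> col s"
proof (rule ccontr)
  assume "\<not> ?thesis"
  then have H: "\<And>p w s. sr S p w \<Longrightarrow> sr S w s \<Longrightarrow> col p = col s" by blast
  have ne: "S \<noteq> {}" using c3 by auto
  define m0 where "m0 = Min S"
  have m0: "m0 \<in> S" unfolding m0_def using Min_in[OF fin ne] .
  obtain m1 where m1: "sr S m0 m1" using sr_exists[OF fin m0] c3 by auto
  have claim: "y \<in> S \<longrightarrow> col y = col m0 \<or> col y = col m1" for y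
  proof (induction y rule: less_induct)
    case (less y)
    show ?case
    proof
      assume yS: "y \<in> S"
      show "col y = col m0 \<or> col y = col m1"
      proof (cases "y = m0")
        case True then show ?thesis by simp
      next
        case False
        have "m0 \<le> y" unfolding m0_def using Min_le[OF fin yS] .
        then have "m0 < y" using False by simp
        then have ex: "\<exists>x\<in>S. x < y" using m0 by blast
        define z where "z = Max {x\<in>S. x < y}"
        have zy: "sr S z y" "z < y" using sr_maxbelow[OF fin yS ex] unfolding z_def by auto
        have zS: "z \<in> S" using zy(1) unfolding sr_def by simp
        show ?thesis
        proof (cases "z = m0")
          case True
          then have "y = m1" using sr_unique[OF m1] zy(1) by simp
          then show ?thesis by simp
        next
          case False
          have "m0 \<le> z" unfolding m0_def using Min_le[OF fin zS] .
          then have "m0 < z" using False by simp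
          then have ex2: "\<exists>x\<in>S. x < z" using m0 by blast
          define z2 where "z2 = Max {x\<in>S. x < z}"
          have z2: "sr S z2 z" "z2 < z" using sr_maxbelow[OF fin zS ex2] unfolding z2_def by auto
          have z2S: "z2 \<in> S" using z2(1) unfolding sr_def by simp
          have "col z2 = col y" using H[OF z2(1) zy(1)] .
          moreover have "col z2 = col m0 \<or> col z2 = col m1" using less[of z2] z2(2) zy(2) z2S by simp
          ultimately show ?thesis by simp
        qed
      qed
    qed
  qed
  have "col ` S \<subseteq> {col m0, col m1}" using claim by auto
  then have "card (col ` S) \<le> 2" by (rule card_sub2)
  then show False using cc by simp
qed

lemma three_colors:
  assumes fin: "finite S" and c3: "card S \<ge> 3" and pr: "proper S col" and u: "u \<in> S"
    and uniq: "\<forall>v\<in>S. col v = col u \<longrightarrow> v = u"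
  shows "card (col ` S) \<ge> 3"
proof -
  obtain p where p: "sr S p u" using sr_exists_pred[OF fin u] c3 by auto
  have pS: "p \<in> S" using p unfolding sr_def by simp
  obtain q where q: "sr S q p" using sr_exists_pred[OF fin pS] c3 by auto
  have qS: "q \<in> S" using q unfolding sr_def by simp
  have qu: "q \<noteq> u"
  proof
    assume "q = u"
    then show False using sr_no2cycle[OF fin c3] p q by blast
  qed
  have c1: "col p \<noteq> col u" "col q \<noteq> col p" using pr p q unfolding proper_def by blast+
  have c2: "col q \<noteq> col u" using uniq qS qu by blast
  have "card {col u, col p, col q} = 3" using c1 c2 by (simp add: card_insert_if)
  moreover have "card {col u, col p, col q} \<le> card (col ` S)"
    using u pS qS fin by (intro card_mono) auto
  ultimately show ?thesis by simp
qed

lemma main_comb: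
  fixes col :: "nat \<Rightarrow> 'c"
  shows "finite S \<Longrightarrow> card S \<ge> 3 \<Longrightarrow> proper S col \<Longrightarrow> card (col ` S) \<ge> 3 \<Longrightarrow>
    \<exists>T. tri S T \<and> (\<forall>(x,y)\<in>T. col x \<noteq> col y)"
proof (induction "card S" arbitrary: S rule: less_induct)
  case less
  have fin: "finite S" and c3: "card S \<ge> 3" and pr: "proper S col" and cc: "card (col ` S) \<ge> 3"
    using less.prems by auto
  show ?case
  proof (cases "card S = 3")
    case True
    have "tri S {}" unfolding tri_def using no_diag[OF fin] True by fastforce
    then show ?thesis by blast
  next
    case False
    then have c4: "card S \<ge> 4" using c3 by simp
    have "\<exists>p w s. sr S p w \<and> sr S w s \<and> col p \<noteq> col s \<and> card (col ` (S-{w})) \<ge> 3"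
    proof (cases "\<exists>u\<in>S. \<forall>v\<in>S. col v = col u \<longrightarrow> v = u")
      case True
      then obtain u where u: "u \<in> S" "\<forall>v\<in>S. col v = col u \<longrightarrow> v = u" by blast
      obtain w where w: "sr S u w" using sr_exists[OF fin u(1)] c3 by auto
      have wS: "w \<in> S" "u \<noteq> w" using w unfolding sr_def by auto
      obtain s where s: "sr S w s" using sr_exists[OF fin wS(1)] c3 by auto
      have sS: "s \<in> S" using s unfolding sr_def by simp
      have su: "s \<noteq> u"
      proof
        assume "s = u" then show False using sr_no2cycle[OF fin c3] w s by blast
      qed
      have cs: "col u \<noteq> col s" using u(2) sS su by metis
      have pr': "proper (S-{w}) col" using proper_remove[OF fin c3 pr w s cs] .
      have "card (S-{w}) = card S - 1" using wS fin by simp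
      then have c3': "card (S-{w}) \<ge> 3" using c4 by simp
      have "card (col ` (S-{w})) \<ge> 3"
        using three_colors[OF _ c3' pr', of u] u wS fin by auto
      then show ?thesis using w s cs by blast
    next
      case False
      obtain p w s where pws: "sr S p w" "sr S w s" "col p \<noteq> col s"
        using good_exists[OF fin c3 pr cc] by blast
      have wS: "w \<in> S" using pws(1) unfolding sr_def by simp
      obtain v where v: "v \<in> S" "col v = col w" "v \<noteq> w" using False wS by blast
      have "col ` S \<subseteq> col ` (S-{w})"
      proof
        fix c assume "c \<in> col ` S"
        then obtain x where x: "x \<in> S" "c = col x" by blast
        show "c \<in> col ` (S-{w})"
        proof (cases "x = w")
          case True then show ?thesis using v x by (metis DiffI image_eqI singletonD)
        next
          case False then show ?thesis using x by blast
        qed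
      qed
      then have "card (col ` S) \<le> card (col ` (S-{w}))" using fin by (intro card_mono) auto
      then show ?thesis using pws cc by fastforce
    qed
    then obtain p w s where pws: "sr S p w" "sr S w s" "col p \<noteq> col s" "card (col ` (S-{w})) \<ge> 3"
      by blast
    have wS: "w \<in> S" using pws(1) unfolding sr_def by simp
    have ps: "p \<noteq> s"
    proof
      assume "p = s" then show False using sr_no2cycle[OF fin c3] pws(1,2) by blast
    qed
    have pr': "proper (S-{w}) col" using proper_remove[OF fin c3 pr pws(1-3)] .
    have cw: "card (S-{w}) = card S - 1" using wS fin by simp
    then have c3': "card (S-{w}) \<ge> 3" "card (S-{w}) < card S" using c4 by auto
    obtain T' where T': "tri (S-{w}) T'" "\<forall>(x,y)\<in>T'. col x \<noteq> col y"
      using less.hyps[OF c3'(2) _ c3'(1) pr' pws(4)] fin by auto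
    have E: "ear_cond S w (min p s) (max p s)" using sr_ear[OF pws(1,2) ps] .
    have "tri S (insert (min p s, max p s) T')" using ear_tri[OF fin c4 E T'(1)] .
    moreover have "col (min p s) \<noteq> col (max p s)" using pws(3) by (cases "p \<le> s") (auto simp: min_def max_def)
    ultimately show ?thesis using T'(2) by blast
  qed
qed


lemma diag_iv: "diag {1..m} d \<longleftrightarrow> is_diagonal m d"
proof -
  obtain a b where d: "d = (a,b)" by (cases d)
  show ?thesis
  proof
    assume "diag {1..m} d"
    then have h: "a \<in> {1..m}" "b \<in> {1..m}" "a < b" "\<exists>x\<in>{1..m}. a < x \<and> x < b" "\<exists>x\<in>{1..m}. x < a \<or> b < x"
      unfolding d diag_def by auto
    obtain x where x: "a < x" "x < b" using h(4) by blast
    obtain y where y: "y \<in> {1..m}" "y < a \<or> b < y" using h(5) by blast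
    have "b - a \<ge> 2" using x by simp
    moreover have "(a,b) \<noteq> (1,m)" using y by auto
    ultimately show "is_diagonal m d" unfolding d is_diagonal_def using h(1-3) by auto
  next
    assume "is_diagonal m d"
    then have h: "1 \<le> a" "a < b" "b \<le> m" "b - a \<ge> 2" "(a,b) \<noteq> (1,m)" unfolding d is_diagonal_def by auto
    have "Suc a \<in> {1..m}" "a < Suc a" "Suc a < b" using h by auto
    moreover have "\<exists>x\<in>{1..m}. x < a \<or> b < x"
    proof (cases "a = 1")
      case True then have "b < m" using h by auto
      then show ?thesis using h by (intro bexI[of _ m]) auto
    next
      case False then show ?thesis using h by (intro bexI[of _ 1]) auto
    qed
    ultimately show "diag {1..m} d" unfolding d diag_def using h by auto
  qed
qed

lemma tri_iv: "tri {1..m} T \<longleftrightarrow> polygon_triangulation m T"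
  unfolding tri_def polygon_triangulation_def diag_iv by blast

lemma sr_iv:
  assumes "sr {1..m} x y"
  shows "(1 \<le> x \<and> x < m \<and> y = Suc x) \<or> (x = m \<and> y = 1)"
proof -
  have xy: "1 \<le> x" "x \<le> m" "1 \<le> y" "y \<le> m" "x \<noteq> y" using assms unfolding sr_def by auto
  have h: "(x < y \<and> (\<forall>z\<in>{1..m}. \<not> (x < z \<and> z < y))) \<or> (y < x \<and> (\<forall>z\<in>{1..m}. y \<le> z \<and> z \<le> x))"
    using assms unfolding sr_def by blast
  then show ?thesis
  proof (elim disjE conjE)
    assume "x < y" "\<forall>z\<in>{1..m}. \<not> (x < z \<and> z < y)"
    then have "\<not> (x < Suc x \<and> Suc x < y)" using xy by auto
    then show ?thesis using xy \<open>x < y\<close> by auto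
  next
    assume "y < x" "\<forall>z\<in>{1..m}. y \<le> z \<and> z \<le> x"
    then have "y \<le> 1" "m \<le> x" using xy by auto
    then show ?thesis using xy by auto
  qed
qed

definition nrm :: "complex \<times> complex \<Rightarrow> complex \<times> complex" where
  "nrm v = (if fst v \<noteq> 0 then (1, snd v / fst v) else (0, 1))"

lemma nrm_eq:
  assumes "v \<noteq> (0,0)" "w \<noteq> (0,0)"
  shows "nrm v = nrm w \<longleftrightarrow> D v w = 0"
proof -
  obtain a b where v: "v = (a,b)" by (cases v)
  obtain c d where w: "w = (c,d)" by (cases w)
  show ?thesis
  proof (cases "a = 0")
    case True
    then have b: "b \<noteq> 0" using assms v by auto
    show ?thesis
    proof (cases "c = 0")
      case True then show ?thesis using \<open>a = 0\<close> v w by (simp add: nrm_def D_def)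
    next
      case False then show ?thesis using \<open>a = 0\<close> b v w by (simp add: nrm_def D_def)
    qed
  next
    case False
    show ?thesis
    proof (cases "c = 0")
      case True
      then have "d \<noteq> 0" using assms w by auto
      then show ?thesis using True False v w by (simp add: nrm_def D_def)
    next
      case c: False
      have "b / a = d / c \<longleftrightarrow> a * d - b * c = 0" using False c by (auto simp: field_simps)
      then show ?thesis using False c v w by (auto simp: nrm_def D_def)
    qed
  qed
qed

lemma V_nz: "V cs n \<noteq> (0,0)"
proof
  assume "V cs n = (0,0)"
  then have "D (V cs n) (V cs (Suc n)) = 0" by (simp add: D_def)
  then show False using D_cons[of cs n] by simp
qed

lemma coldiff: "D (V cs a) (V cs b) \<noteq> 0 \<Longrightarrow> nrm (V cs a) \<noteq> nrm (V cs b)"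
  using nrm_eq[OF V_nz V_nz] by blast

lemma c_D: "D (V cs k) (V cs (Suc (Suc k))) = cper cs (Suc k)"
  using D_rec[of "V cs k" cs k] D_cons[of cs k] by simp

lemma three_pts:
  assumes "a \<in> S" "b \<in> S" "c \<in> S" "finite S" "f a \<noteq> f b" "f b \<noteq> f c" "f a \<noteq> f c"
  shows "card (f ` S) \<ge> 3"
proof -
  have "card {f a, f b, f c} = 3" using assms by (simp add: card_insert_if)
  moreover have "card {f a, f b, f c} \<le> card (f ` S)" using assms by (intro card_mono) auto
  ultimately show ?thesis by simp
qed

lemma map_cper: "length cs = m \<Longrightarrow> map (cper cs) [1..<1+m] = cs"
  by (rule nth_equalityI) (simp_all add: cper_def nth_upt del: upt_Suc)

theorem theorem5p4:
  fixes cs :: "complex list" and m :: nat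
  assumes "m \<ge> 4" and "length cs = m"
    and "quiddity_cycle cs"
    and "\<exists>x\<in>set cs. x \<noteq> 0"
  shows "\<exists>T. polygon_triangulation m T \<and> (\<forall>(i, j)\<in>T. frieze_entry cs i j \<noteq> 0)"
proof -
  have q: "eta_prod (map (cper cs) [1..<1+m]) = - mat 1"
    using assms(3) map_cper[OF assms(2)] unfolding quiddity_cycle_def by simp
  have e: "D (V cs 0) (V cs (Suc m)) = -1" "- D (V cs 0) (V cs m) = 0"
          "D (V cs 1) (V cs (Suc m)) = 0" "- D (V cs 1) (V cs m) = -1"
    using Xlem[of 1 cs m] unfolding q by (simp_all add: mat_def)
  then have Vm: "V cs m = (0,1)" "V cs (Suc m) = (-1,0)"
    by (auto simp: D_def prod_eq_iff)
  define col where "col k = nrm (V cs (k - 1))" for k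
  have colne: "col a \<noteq> col b" if "D (V cs (a-1)) (V cs (b-1)) \<noteq> 0" for a b
    unfolding col_def by (rule coldiff) (rule that)
  have cons: "col k \<noteq> col (Suc k)" if "1 \<le> k" for k
  proof -
    have sk: "Suc (k-1) = k" using that by simp
    have "D (V cs (k-1)) (V cs (Suc (k-1))) = 1" by (rule D_cons)
    then have "D (V cs (k-1)) (V cs (Suc k - 1)) \<noteq> 0" unfolding sk by simp
    then show ?thesis by (rule colne)
  qed
  have sm: "Suc (m-1) = m" using assms(1) by simp
  have "D (V cs (m-1)) (V cs (Suc (m-1))) = 1" by (rule D_cons)
  then have "D (V cs (m-1)) (V cs m) = 1" unfolding sm .
  then have fm: "fst (V cs (m-1)) = 1" using Vm(1) by (simp add: D_def del: V.simps)
  have wrap: "col m \<noteq> col 1"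
  proof -
    have "D (V cs (m-1)) (V cs (1-1)) \<noteq> 0" using fm by (simp add: D_def)
    then show ?thesis by (rule colne)
  qed
  have pr: "proper {1..m} col"
    unfolding proper_def
  proof (intro allI impI)
    fix x y assume "sr {1..m} x y"
    then have "(1 \<le> x \<and> x < m \<and> y = Suc x) \<or> (x = m \<and> y = 1)" by (rule sr_iv)
    then show "col x \<noteq> col y" using cons wrap by auto
  qed
  obtain i where i: "i < m" "cs ! i \<noteq> 0" using assms(2,4) by (auto simp: in_set_conv_nth)
  have ci: "cper cs (Suc i) = cs ! i" using i assms(2) by (simp add: cper_def)
  have cD: "D (V cs i) (V cs (Suc (Suc i))) \<noteq> 0" using c_D[of cs i] ci i by (simp del: V.simps)
  have fin: "finite {1..m}" by simp
  have cc: "card (col ` {1..m}) \<ge> 3"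
  proof (cases "Suc (Suc (Suc i)) \<le> m")
    case True
    have "D (V cs (Suc i - 1)) (V cs (Suc (Suc (Suc i)) - 1)) \<noteq> 0" using cD by (simp del: V.simps)
    then have "col (Suc i) \<noteq> col (Suc (Suc (Suc i)))" by (rule colne)
    then show ?thesis using three_pts[OF _ _ _ fin, of "Suc i" "Suc (Suc i)" "Suc (Suc (Suc i))" col]
      True cons[of "Suc i"] cons[of "Suc (Suc i)"] by auto
  next
    case False
    then have "i = m - 2 \<or> i = m - 1" using i by auto
    then show ?thesis
    proof
      assume im: "i = m - 2"
      then have "Suc (Suc i) = m" using assms(1) by simp
      then have "V cs (Suc (Suc i)) = (0,1)" using Vm(1) by (simp del: V.simps)
      then have "fst (V cs i) \<noteq> 0" using cD by (simp add: D_def del: V.simps)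
      then have "D (V cs (Suc i - 1)) (V cs (1 - 1)) \<noteq> 0" by (simp add: D_def)
      then have a: "col (Suc i) \<noteq> col 1" by (rule colne)
      have b: "col (Suc i) \<noteq> col m" using cons[of "Suc i"] \<open>Suc (Suc i) = m\<close> by simp
      show ?thesis using three_pts[OF _ _ _ fin, of "Suc i" m 1 col] a b wrap im assms(1) by auto
    next
      assume im: "i = m - 1"
      then have "Suc i = m" using assms(1) by simp
      then have "V cs (Suc (Suc i)) = (-1,0)" using Vm(2) by (simp del: V.simps)
      then have "snd (V cs i) \<noteq> 0" using cD by (simp add: D_def del: V.simps)
      then have "D (V cs i) (V cs 1) \<noteq> 0" by (simp add: D_def)
      moreover have "m - 1 = i" using im by simp
      ultimately have "D (V cs (m - 1)) (V cs (2 - 1)) \<noteq> 0" by simp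
      then have a: "col m \<noteq> col 2" by (rule colne)
      have b: "col 1 \<noteq> col 2" using cons[of 1] by (simp add: numeral_2_eq_2)
      show ?thesis using three_pts[OF _ _ _ fin, of m 1 2 col] a b wrap assms(1) by auto
    qed
  qed
  have c3: "card {1..m} \<ge> 3" using assms(1) by simp
  obtain T where T: "tri {1..m} T" "\<forall>(x,y)\<in>T. col x \<noteq> col y"
    using main_comb[OF fin c3 pr cc] by blast
  have "\<forall>(i, j)\<in>T. frieze_entry cs i j \<noteq> 0"
  proof (intro ballI, clarify)
    fix a b assume ab: "(a,b) \<in> T" and z: "frieze_entry cs a b = 0"
    have "is_diagonal m (a,b)" using T(1) ab diag_iv unfolding tri_def by blast
    then have h: "1 \<le> a" "a + 2 \<le> b" unfolding is_diagonal_def by auto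
    have "D (V cs (a-1)) (V cs (b-1)) = 0" using z frieze_D[OF h, of cs] by simp
    then have "col a = col b" unfolding col_def using nrm_eq[OF V_nz V_nz] by blast
    then show False using T(2) ab by blast
  qed
  then show ?thesis using T(1) tri_iv by blast
qed

end
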